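(* Let $H=\sum_{a=1}^m\lambda_aE_a$ be a $k$-local Hamiltonian and $G=\sum_{b=1}^{m'}\kappa_bF_b$ a $k'$-local Hamiltonian. Then, for a universal implied constant, $$\|[H,G]\|_{2,\mathrm{loc}}\lesssim k'k\,\|H\|_{1,\mathrm{loc}}\|G\|_{2,\mathrm{loc}},\qquad \|[H,G]\|_F\lesssim k'k\,\|H\|_{1,\mathrm{loc}}\|G\|_F.$$
   Context: $\mathcal{P}$ denotes the set of $n$-qubit tensor products of Pauli matrices; $\mathrm{supp}(P)$ is the set of qubits on which $P$ acts non-trivially. A $k$-local Hamiltonian is $H=\sum_a\lambda_aE_a$ with real $\lambda_a$ and distinct non-identity Paulis $E_a$ with $|\mathrm{supp}(E_a)|\le k$. For any operator $A=\sum_{X\in\mathcal{P}}\xi_XX$ (Pauli expansion, possibly complex coefficients), $\|A\|_{1,\mathrm{loc}}=\max_{i\in[n]}\sum_{X:\,i\in\mathrm{supp}(X)}|\xi_X|$ and $\|A\|_{2,\mathrm{loc}}=\max_{i\in[n]}\big(\sum_{X:\,i\in\mathrm{supp}(X)}|\xi_X|^2\big)^{1/2}$. $\|\cdot\|_F$ is the Frobenius norm and $\lesssim$ hides a universal constant. *)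

theory Defs
  imports "Jordan_Normal_Form.Matrix"
begin

text \<open>Single-qubit Pauli labels and their 2x2 matrices, with entries indexed by
  (row bit, column bit); True stands for basis state 1.\<close>

datatype pauli = PI | PX | PY | PZ

fun pauli_entry :: "pauli \<Rightarrow> bool \<Rightarrow> bool \<Rightarrow> complex" where
  "pauli_entry PI r c = (if r = c then 1 else 0)"
| "pauli_entry PX r c = (if r = c then 0 else 1)"
| "pauli_entry PY r c = (if r = c then 0 else (if r then \<i> else - \<i>))"
| "pauli_entry PZ r c = (if r = c then (if r then -1 else 1) else 0)"

type_synonym pstring = "nat \<Rightarrow> pauli"

definition paulis :: "nat \<Rightarrow> pstring set" where
  "paulis n = {P. \<forall>i. n \<le> i \<longrightarrow> P i = PI}"

definition supp :: "pstring \<Rightarrow> nat set" where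
  "supp P = {i. P i \<noteq> PI}"

text \<open>Matrix of the tensor product of Pauli matrices, a 2^n x 2^n complex matrix;
  basis index j encodes the computational basis state whose qubit i is bit i of j.\<close>

definition pauli_mat :: "nat \<Rightarrow> pstring \<Rightarrow> complex mat" where
  "pauli_mat n P = mat (2^n) (2^n) (\<lambda>(r, c). \<Prod>i<n. pauli_entry (P i) (bit r i) (bit c i))"

text \<open>A k-local Hamiltonian on n qubits, H = sum_a lambda_a E_a with distinct
  non-identity Paulis E_a of weight at most k, is given by its real coefficient
  function lam on Pauli strings (so the E_a are automatically distinct).\<close>

definition k_local :: "nat \<Rightarrow> nat \<Rightarrow> (pstring \<Rightarrow> real) \<Rightarrow> bool" where
  "k_local n k lam \<longleftrightarrow>
     (\<forall>P. lam P \<noteq> 0 \<longrightarrow> P \<in> paulis n \<and> supp P \<noteq> {} \<and> card (supp P) \<le> k)"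

text \<open>Sum of matrices of a given dimension (JNF has no additive monoid on
  arbitrary-dimension matrices, so we fold with a fixed zero).\<close>

definition msum :: "nat \<Rightarrow> ('b \<Rightarrow> complex mat) \<Rightarrow> 'b set \<Rightarrow> complex mat" where
  "msum d f S = mat d d (\<lambda>(r, c). \<Sum>x\<in>S. f x $$ (r, c))"

definition hamiltonian :: "nat \<Rightarrow> (pstring \<Rightarrow> real) \<Rightarrow> complex mat" where
  "hamiltonian n lam =
     msum (2^n) (\<lambda>P. complex_of_real (lam P) \<cdot>\<^sub>m pauli_mat n P) (paulis n)"

definition mtrace :: "complex mat \<Rightarrow> complex" where
  "mtrace A = (\<Sum>i<dim_row A. A $$ (i, i))"

text \<open>Pauli expansion coefficient xi_X of an n-qubit operator A:
  A = sum_X xi_X X with xi_X = tr(X A) / 2^n (Paulis are Hermitian and orthogonal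
  w.r.t. the Hilbert-Schmidt inner product).\<close>

definition pcoeff :: "nat \<Rightarrow> complex mat \<Rightarrow> pstring \<Rightarrow> complex" where
  "pcoeff n A X = mtrace (pauli_mat n X * A) / 2^n"

definition loc1 :: "nat \<Rightarrow> complex mat \<Rightarrow> real" where
  "loc1 n A = Max (insert 0 ((\<lambda>i. \<Sum>X\<in>{X\<in>paulis n. i \<in> supp X}. cmod (pcoeff n A X)) ` {..<n}))"

definition loc2 :: "nat \<Rightarrow> complex mat \<Rightarrow> real" where
  "loc2 n A = Max (insert 0 ((\<lambda>i. sqrt (\<Sum>X\<in>{X\<in>paulis n. i \<in> supp X}. (cmod (pcoeff n A X))\<^sup>2)) ` {..<n}))"

definition frob :: "complex mat \<Rightarrow> real" where
  "frob A = sqrt (\<Sum>r<dim_row A. \<Sum>c<dim_col A. (cmod (A $$ (r, c)))\<^sup>2)"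

definition commutator :: "complex mat \<Rightarrow> complex mat \<Rightarrow> complex mat" where
  "commutator A B = A * B - B * A"

end

theory Submission
  imports Defs
begin

fun pm1 :: "pauli \<Rightarrow> pauli \<Rightarrow> pauli" where
  "pm1 PI q = q"
| "pm1 PX PI = PX" | "pm1 PX PX = PI" | "pm1 PX PY = PZ" | "pm1 PX PZ = PY"
| "pm1 PY PI = PY" | "pm1 PY PX = PZ" | "pm1 PY PY = PI" | "pm1 PY PZ = PX"
| "pm1 PZ PI = PZ" | "pm1 PZ PX = PY" | "pm1 PZ PY = PX" | "pm1 PZ PZ = PI"

fun om :: "pauli \<Rightarrow> pauli \<Rightarrow> complex" where
  "om PX PY = \<i>" | "om PY PX = - \<i>"
| "om PY PZ = \<i>" | "om PZ PY = - \<i>"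
| "om PZ PX = \<i>" | "om PX PZ = - \<i>"
| "om _ _ = 1"

lemma pm1_comm: "pm1 p q = pm1 q p" by (cases p; cases q) auto
lemma pm1_inv: "pm1 p (pm1 p q) = q" by (cases p; cases q) auto
lemma pm1_PI_iff: "pm1 p q = PI \<longleftrightarrow> p = q" by (cases p; cases q) auto
lemma norm_om: "cmod (om p q) = 1" by (cases p; cases q) auto
lemma om_comm: "p = PI \<or> q = PI \<or> p = q \<Longrightarrow> om p q = om q p" by (cases p; cases q) auto

lemma single_prod:
  "pauli_entry p a False * pauli_entry q False c + pauli_entry p a True * pauli_entry q True c
   = om p q * pauli_entry (pm1 p q) a c"
  by (cases p; cases q; cases a; cases c) auto

lemma single_tr:
  "pauli_entry x False False * pauli_entry y False False + pauli_entry x False True * pauli_entry y True False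
  + (pauli_entry x True False * pauli_entry y False True + pauli_entry x True True * pauli_entry y True True)
   = (if x = y then 2 else 0)"
  by (cases x; cases y) auto

lemma single_fr:
  "pauli_entry x False False * cnj (pauli_entry y False False) + pauli_entry x False True * cnj (pauli_entry y False True)
  + (pauli_entry x True False * cnj (pauli_entry y True False) + pauli_entry x True True * cnj (pauli_entry y True True))
   = (if x = y then 2 else 0)"
  by (cases x; cases y) auto

lemma bit_low: "s < 2^n \<Longrightarrow> \<not> bit (s::nat) n"
  by (simp add: bit_iff_odd)

lemma bit_high: "s < 2^n \<Longrightarrow> i \<le> n \<Longrightarrow> bit (s + 2^n::nat) i = (if i = n then True else bit s i)"
proof -
  assume s: "s < 2^n" and i: "i \<le> n"
  have "bit (s + 2^n) i = (bit s i \<or> bit (2^n::nat) i)"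
    apply (rule bit_disjunctive_add_iff)
    using s bit_low by (auto simp: bit_exp_iff)
  then show ?thesis using s bit_low by (auto simp: bit_exp_iff)
qed

lemma sum_split_pow: "(\<Sum>s<2^Suc n. (g::nat\<Rightarrow>'a::comm_monoid_add) s) = (\<Sum>s<2^n. g s) + (\<Sum>s<2^n. g (s + 2^n))"
proof -
  have "{..<2^Suc n} = {..<2^n} \<union> (\<lambda>s. s + 2^n) ` {..<(2::nat)^n}"
  proof (intro equalityI subsetI)
    fix x assume "x \<in> {..<(2::nat)^Suc n}"
    then show "x \<in> {..<2^n} \<union> (\<lambda>s. s + 2^n) ` {..<(2::nat)^n}"
      by (cases "x < 2^n") (auto simp: image_iff intro!: bexI[of _ "x - 2^n"])
  qed auto
  moreover have "inj_on (\<lambda>s. s + (2::nat)^n) {..<2^n}" by (auto simp: inj_on_def)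
  ultimately show ?thesis
    apply (simp only:)
    apply (subst sum.union_disjoint)
       apply auto[3]
    apply (simp add: sum.reindex)
    done
qed

lemma F1: "(\<Sum>s<(2::nat)^n. \<Prod>i<n. (f::nat \<Rightarrow> bool \<Rightarrow> 'a::comm_semiring_1) i (bit s i)) = (\<Prod>i<n. f i False + f i True)"
proof (induction n arbitrary: f)
  case 0 then show ?case by (simp add: lessThan_Suc)
next
  case (Suc n)
  have A: "(\<Prod>i<n. f i (bit s i)) * f n (bit s n) = (\<Prod>i<n. f i (bit s i)) * f n False" if "s < 2^n" for s :: nat
    using that bit_low by (simp)
  have B: "(\<Prod>i<n. f i (bit (s + 2^n) i)) * f n (bit (s + 2^n) n) = (\<Prod>i<n. f i (bit s i)) * f n True" if "s < 2^n" for s :: nat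
  proof -
    have "(\<Prod>i<n. f i (bit (s + 2^n) i)) = (\<Prod>i<n. f i (bit s i))"
      by (rule prod.cong) (use that bit_high in auto)
    then show ?thesis using that bit_high[of s n n] by simp
  qed
  have "(\<Sum>s<(2::nat)^Suc n. \<Prod>i<Suc n. f i (bit s i))
     = (\<Sum>s<(2::nat)^n. (\<Prod>i<n. f i (bit s i)) * f n False) + (\<Sum>s<(2::nat)^n. (\<Prod>i<n. f i (bit s i)) * f n True)"
    unfolding sum_split_pow by (simp add: A B)
  also have "\<dots> = (\<Prod>i<n. f i False + f i True) * (f n False + f n True)"
    by (simp add: sum_distrib_right[symmetric] Suc distrib_left)
  finally show ?case by simp
qed

lemma F2: "(\<Sum>r<(2::nat)^n. \<Sum>s<(2::nat)^n. \<Prod>i<n. (g::nat \<Rightarrow> bool \<Rightarrow> bool \<Rightarrow> 'a::comm_semiring_1) i (bit r i) (bit s i))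
   = (\<Prod>i<n. (g i False False + g i False True) + (g i True False + g i True True))"
proof -
  have "(\<Sum>r<(2::nat)^n. \<Sum>s<(2::nat)^n. \<Prod>i<n. g i (bit r i) (bit s i)) = (\<Sum>r<(2::nat)^n. \<Prod>i<n. g i (bit r i) False + g i (bit r i) True)"
    by (rule sum.cong) (auto simp: F1[where f="\<lambda>i b. g i (bit _ i) b"])
  also have "\<dots> = (\<Prod>i<n. (g i False False + g i False True) + (g i True False + g i True True))"
    by (rule F1[where f="\<lambda>i a. g i a False + g i a True"])
  finally show ?thesis .
qed

lemma UNIV_pauli: "(UNIV::pauli set) = {PI,PX,PY,PZ}"
  by (auto intro: pauli.exhaust)

lemma finite_paulis: "finite (paulis n)"
proof -
  have "paulis n = {f. \<forall>x. (x \<in> {..<n} \<longrightarrow> f x \<in> UNIV) \<and> (x \<notin> {..<n} \<longrightarrow> f x = PI)}"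
    by (auto simp: paulis_def)
  then show ?thesis using finite_set_of_finite_funs[of "{..<n}" "UNIV::pauli set" PI]
    by (simp add: UNIV_pauli)
qed

definition pmul :: "pstring \<Rightarrow> pstring \<Rightarrow> pstring" where
  "pmul P Q = (\<lambda>i. pm1 (P i) (Q i))"

definition Om :: "nat \<Rightarrow> pstring \<Rightarrow> pstring \<Rightarrow> complex" where
  "Om n P Q = (\<Prod>i<n. om (P i) (Q i))"

definition Mc :: "nat \<Rightarrow> (pstring \<Rightarrow> complex) \<Rightarrow> complex mat" where
  "Mc n c = msum (2^n) (\<lambda>P. c P \<cdot>\<^sub>m pauli_mat n P) (paulis n)"

lemma pmul_paulis: "P \<in> paulis n \<Longrightarrow> Q \<in> paulis n \<Longrightarrow> pmul P Q \<in> paulis n"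
  by (auto simp: paulis_def pmul_def)

lemma pmul_inv[simp]: "pmul P (pmul P Q) = Q"
  by (simp add: pmul_def pm1_inv)

lemma pmul_comm: "pmul P Q = pmul Q P"
  by (simp add: pmul_def pm1_comm)

lemma paulis_eq: "X \<in> paulis n \<Longrightarrow> Y \<in> paulis n \<Longrightarrow> (\<forall>i<n. X i = Y i) \<longleftrightarrow> X = Y"
  by (auto simp: paulis_def intro!: ext) (metis not_le)

lemma supp_paulis: "X \<in> paulis n \<Longrightarrow> i \<in> supp X \<Longrightarrow> i < n"
  by (auto simp: paulis_def supp_def) (meson not_le)

lemma reindex_pmul: "P \<in> paulis n \<Longrightarrow> (\<Sum>Q\<in>paulis n. F Q) = (\<Sum>X\<in>paulis n. F (pmul P X))"
  by (rule sum.reindex_bij_witness[where i="pmul P" and j="pmul P"]) (auto simp: pmul_paulis)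

lemma norm_Om: "cmod (Om n P Q) = 1"
  by (simp add: Om_def prod_norm[symmetric] norm_om)

lemma pm_entry: "r < 2^n \<Longrightarrow> c < 2^n \<Longrightarrow>
   pauli_mat n P $$ (r,c) = (\<Prod>i<n. pauli_entry (P i) (bit r i) (bit c i))"
  by (simp add: pauli_mat_def)

lemma pm_dim[simp]: "dim_row (pauli_mat n P) = 2^n" "dim_col (pauli_mat n P) = 2^n"
  by (simp_all add: pauli_mat_def)

lemma prod_if_eq: "(\<Prod>i<n. if X i = Y i then (2::complex) else 0) = (if \<forall>i<n. X i = Y i then 2^n else 0)"
  by auto

lemma prod_entry: "r < 2^n \<Longrightarrow> t < 2^n \<Longrightarrow>
  (\<Sum>s<2^n. pauli_mat n P $$ (r,s) * pauli_mat n Q $$ (s,t)) = Om n P Q * pauli_mat n (pmul P Q) $$ (r,t)"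
proof -
  assume r: "r < 2^n" and t: "t < 2^n"
  have "(\<Sum>s<2^n. pauli_mat n P $$ (r,s) * pauli_mat n Q $$ (s,t))
     = (\<Sum>s<(2::nat)^n. \<Prod>i<n. pauli_entry (P i) (bit r i) (bit s i) * pauli_entry (Q i) (bit s i) (bit t i))"
    using r t by (simp add: pm_entry prod.distrib)
  also have "\<dots> = (\<Prod>i<n. pauli_entry (P i) (bit r i) False * pauli_entry (Q i) False (bit t i)
      + pauli_entry (P i) (bit r i) True * pauli_entry (Q i) True (bit t i))"
    by (rule F1[where f="\<lambda>i b. pauli_entry (P i) (bit r i) b * pauli_entry (Q i) b (bit t i)"])
  also have "\<dots> = (\<Prod>i<n. om (P i) (Q i) * pauli_entry (pm1 (P i) (Q i)) (bit r i) (bit t i))"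
    by (simp add: single_prod)
  also have "\<dots> = Om n P Q * pauli_mat n (pmul P Q) $$ (r,t)"
    using r t by (simp add: prod.distrib Om_def pm_entry pmul_def)
  finally show ?thesis .
qed

lemma tr_entry: "X \<in> paulis n \<Longrightarrow> Y \<in> paulis n \<Longrightarrow>
  (\<Sum>r<2^n. \<Sum>s<2^n. pauli_mat n X $$ (r,s) * pauli_mat n Y $$ (s,r)) = (if X = Y then 2^n else 0)"
proof -
  assume X: "X \<in> paulis n" and Y: "Y \<in> paulis n"
  have "(\<Sum>r<2^n. \<Sum>s<2^n. pauli_mat n X $$ (r,s) * pauli_mat n Y $$ (s,r))
     = (\<Sum>r<(2::nat)^n. \<Sum>s<(2::nat)^n. \<Prod>i<n. pauli_entry (X i) (bit r i) (bit s i) * pauli_entry (Y i) (bit s i) (bit r i))"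
    by (intro sum.cong refl) (simp add: pm_entry prod.distrib)
  also have "\<dots> = (\<Prod>i<n. if X i = Y i then 2 else 0)"
    by (subst F2[where g="\<lambda>i a b. pauli_entry (X i) a b * pauli_entry (Y i) b a"]) (simp add: single_tr)
  also have "\<dots> = (if X = Y then 2^n else 0)"
    by (simp only: prod_if_eq paulis_eq[OF X Y])
  finally show ?thesis .
qed

lemma fr_entry: "X \<in> paulis n \<Longrightarrow> Y \<in> paulis n \<Longrightarrow>
  (\<Sum>r<2^n. \<Sum>s<2^n. pauli_mat n X $$ (r,s) * cnj (pauli_mat n Y $$ (r,s))) = (if X = Y then 2^n else 0)"
proof -
  assume X: "X \<in> paulis n" and Y: "Y \<in> paulis n"
  have "(\<Sum>r<2^n. \<Sum>s<2^n. pauli_mat n X $$ (r,s) * cnj (pauli_mat n Y $$ (r,s)))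
     = (\<Sum>r<(2::nat)^n. \<Sum>s<(2::nat)^n. \<Prod>i<n. pauli_entry (X i) (bit r i) (bit s i) * cnj (pauli_entry (Y i) (bit r i) (bit s i)))"
    by (intro sum.cong refl) (simp add: pm_entry prod.distrib cnj_prod)
  also have "\<dots> = (\<Prod>i<n. if X i = Y i then 2 else 0)"
    by (subst F2[where g="\<lambda>i a b. pauli_entry (X i) a b * cnj (pauli_entry (Y i) a b)"]) (simp add: single_fr)
  also have "\<dots> = (if X = Y then 2^n else 0)"
    by (simp only: prod_if_eq paulis_eq[OF X Y])
  finally show ?thesis .
qed

lemma swap3: "(\<Sum>x\<in>A. \<Sum>y\<in>B. \<Sum>z\<in>C. f x y z) = (\<Sum>y\<in>B. \<Sum>z\<in>C. \<Sum>x\<in>A. f x y z)"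
proof -
  have "(\<Sum>x\<in>A. \<Sum>y\<in>B. \<Sum>z\<in>C. f x y z) = (\<Sum>y\<in>B. \<Sum>x\<in>A. \<Sum>z\<in>C. f x y z)"
    by (rule sum.swap)
  also have "\<dots> = (\<Sum>y\<in>B. \<Sum>z\<in>C. \<Sum>x\<in>A. f x y z)"
    by (rule sum.cong[OF refl], rule sum.swap)
  finally show ?thesis .
qed

lemma swap4: "(\<Sum>a\<in>A. \<Sum>b\<in>B. \<Sum>c\<in>C. \<Sum>d\<in>D. f a b c d) = (\<Sum>c\<in>C. \<Sum>d\<in>D. \<Sum>a\<in>A. \<Sum>b\<in>B. f a b c d)"
proof -
  have "(\<Sum>a\<in>A. \<Sum>b\<in>B. \<Sum>c\<in>C. \<Sum>d\<in>D. f a b c d) = (\<Sum>a\<in>A. \<Sum>c\<in>C. \<Sum>d\<in>D. \<Sum>b\<in>B. f a b c d)"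
    by (rule sum.cong[OF refl], rule swap3)
  also have "\<dots> = (\<Sum>c\<in>C. \<Sum>d\<in>D. \<Sum>a\<in>A. \<Sum>b\<in>B. f a b c d)"
    by (rule swap3)
  finally show ?thesis .
qed

lemma sum_delta_mult: "finite A \<Longrightarrow> X \<in> A \<Longrightarrow> (\<Sum>Y\<in>A. (f::_\<Rightarrow>'b::comm_semiring_1) Y * (if X = Y then c else 0)) = f X * c"
proof -
  assume "finite A" "X \<in> A"
  have "(\<Sum>Y\<in>A. f Y * (if X = Y then c else 0)) = (\<Sum>Y\<in>A. if X = Y then f Y * c else 0)"
    by (rule sum.cong) auto
  also have "\<dots> = f X * c" using \<open>finite A\<close> \<open>X \<in> A\<close> by (simp add: sum.delta)
  finally show ?thesis .
qed

lemma Mc_dim[simp]: "dim_row (Mc n h) = 2^n" "dim_col (Mc n h) = 2^n"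
  by (simp_all add: Mc_def msum_def)

lemma Mc_entry: "r < 2^n \<Longrightarrow> c < 2^n \<Longrightarrow>
  Mc n h $$ (r,c) = (\<Sum>X\<in>paulis n. h X * pauli_mat n X $$ (r,c))"
  by (simp add: Mc_def msum_def)

lemma mult_entry: "dim_col A = dim_row B \<Longrightarrow> i < dim_row A \<Longrightarrow> j < dim_col B \<Longrightarrow>
  (A * B) $$ (i,j) = (\<Sum>k<dim_row B. A $$ (i,k) * B $$ (k,j))"
  by (simp add: scalar_prod_def atLeast0LessThan)

lemma pcoeff_Mc: "X \<in> paulis n \<Longrightarrow> pcoeff n (Mc n h) X = h X"
proof -
  assume X: "X \<in> paulis n"
  have "mtrace (pauli_mat n X * Mc n h) = (\<Sum>r<2^n. \<Sum>s<2^n. pauli_mat n X $$ (r,s) * Mc n h $$ (s,r))"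
    unfolding mtrace_def by (rule sum.cong) (simp, subst mult_entry, auto)
  also have "\<dots> = (\<Sum>r<2^n. \<Sum>s<2^n. \<Sum>Y\<in>paulis n. h Y * (pauli_mat n X $$ (r,s) * pauli_mat n Y $$ (s,r)))"
    by (intro sum.cong refl) (simp add: Mc_entry sum_distrib_left mult_ac)
  also have "\<dots> = (\<Sum>Y\<in>paulis n. \<Sum>r<2^n. \<Sum>s<2^n. h Y * (pauli_mat n X $$ (r,s) * pauli_mat n Y $$ (s,r)))"
    by (rule swap3[symmetric])
  also have "\<dots> = (\<Sum>Y\<in>paulis n. h Y * (\<Sum>r<2^n. \<Sum>s<2^n. pauli_mat n X $$ (r,s) * pauli_mat n Y $$ (s,r)))"
    by (simp add: sum_distrib_left)
  also have "\<dots> = (\<Sum>Y\<in>paulis n. h Y * (if X = Y then 2^n else 0))"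
    by (intro sum.cong refl) (simp add: tr_entry X)
  also have "\<dots> = h X * 2^n"
    using X finite_paulis by (simp add: sum_delta_mult)
  finally show ?thesis by (simp add: pcoeff_def)
qed

lemma frob_Mc: "frob (Mc n h) = sqrt (2^n * (\<Sum>X\<in>paulis n. (cmod (h X))\<^sup>2))"
proof -
  have "complex_of_real (\<Sum>r<2^n. \<Sum>c<2^n. (cmod (Mc n h $$ (r, c)))\<^sup>2)
     = (\<Sum>r<2^n. \<Sum>c<2^n. Mc n h $$ (r, c) * cnj (Mc n h $$ (r, c)))"
    by (simp only: of_real_sum complex_norm_square)
  also have "\<dots> = (\<Sum>r<2^n. \<Sum>c<2^n. \<Sum>X\<in>paulis n. \<Sum>Y\<in>paulis n. h X * cnj (h Y) * (pauli_mat n X $$ (r,c) * cnj (pauli_mat n Y $$ (r,c))))"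
    apply (intro sum.cong refl)
    apply (simp only: lessThan_iff Mc_entry cnj_sum sum_product)
    apply (intro sum.cong refl)
    apply (simp add: mult_ac)
    done
  also have "\<dots> = (\<Sum>X\<in>paulis n. \<Sum>Y\<in>paulis n. \<Sum>r<2^n. \<Sum>c<2^n. h X * cnj (h Y) * (pauli_mat n X $$ (r,c) * cnj (pauli_mat n Y $$ (r,c))))"
    by (rule swap4)
  also have "\<dots> = (\<Sum>X\<in>paulis n. \<Sum>Y\<in>paulis n. h X * cnj (h Y) * (\<Sum>r<2^n. \<Sum>c<2^n. pauli_mat n X $$ (r,c) * cnj (pauli_mat n Y $$ (r,c))))"
    by (simp add: sum_distrib_left)
  also have "\<dots> = (\<Sum>X\<in>paulis n. \<Sum>Y\<in>paulis n. h X * cnj (h Y) * (if X = Y then 2^n else 0))"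
    by (intro sum.cong refl) (simp add: fr_entry)
  also have "\<dots> = (\<Sum>X\<in>paulis n. h X * cnj (h X) * 2^n)"
    by (intro sum.cong refl) (simp add: sum_delta_mult finite_paulis)
  also have "\<dots> = complex_of_real (2^n * (\<Sum>X\<in>paulis n. (cmod (h X))\<^sup>2))"
    by (simp only: of_real_mult of_real_sum complex_norm_square) (simp add: sum_distrib_left mult_ac)
  finally have "(\<Sum>r<2^n. \<Sum>c<2^n. (cmod (Mc n h $$ (r, c)))\<^sup>2) = 2^n * (\<Sum>X\<in>paulis n. (cmod (h X))\<^sup>2)"
    using of_real_eq_iff by blast
  then show ?thesis by (simp add: frob_def)
qed

lemma mult_Mc_entry: "r < 2^n \<Longrightarrow> t < 2^n \<Longrightarrow>
  (Mc n a * Mc n b) $$ (r,t) = (\<Sum>P\<in>paulis n. \<Sum>Q\<in>paulis n. a P * b Q * (Om n P Q * pauli_mat n (pmul P Q) $$ (r,t)))"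
proof -
  assume r: "r < 2^n" and t: "t < 2^n"
  have "(Mc n a * Mc n b) $$ (r,t) = (\<Sum>s<2^n. Mc n a $$ (r,s) * Mc n b $$ (s,t))"
    using r t by (subst mult_entry, auto)
  also have "\<dots> = (\<Sum>s<2^n. \<Sum>P\<in>paulis n. \<Sum>Q\<in>paulis n. a P * b Q * (pauli_mat n P $$ (r,s) * pauli_mat n Q $$ (s,t)))"
    apply (intro sum.cong refl)
    apply (simp only: lessThan_iff Mc_entry r t sum_product)
    apply (intro sum.cong refl)
    apply (simp add: mult_ac)
    done
  also have "\<dots> = (\<Sum>P\<in>paulis n. \<Sum>Q\<in>paulis n. \<Sum>s<2^n. a P * b Q * (pauli_mat n P $$ (r,s) * pauli_mat n Q $$ (s,t)))"
    by (rule swap3)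
  also have "\<dots> = (\<Sum>P\<in>paulis n. \<Sum>Q\<in>paulis n. a P * b Q * (\<Sum>s<2^n. pauli_mat n P $$ (r,s) * pauli_mat n Q $$ (s,t)))"
    by (simp add: sum_distrib_left)
  also have "\<dots> = (\<Sum>P\<in>paulis n. \<Sum>Q\<in>paulis n. a P * b Q * (Om n P Q * pauli_mat n (pmul P Q) $$ (r,t)))"
    using r t by (simp add: prod_entry)
  finally show ?thesis .
qed

definition hc :: "nat \<Rightarrow> (pstring \<Rightarrow> complex) \<Rightarrow> (pstring \<Rightarrow> complex) \<Rightarrow> pstring \<Rightarrow> complex" where
  "hc n a b X = (\<Sum>P\<in>paulis n. a P * b (pmul P X) * (Om n P (pmul P X) - Om n (pmul P X) P))"

lemma comm_Mc: "commutator (Mc n a) (Mc n b) = Mc n (hc n a b)"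
proof (rule eq_matI)
  fix r t assume r: "r < dim_row (Mc n (hc n a b))" and t: "t < dim_col (Mc n (hc n a b))"
  then have r: "r < 2^n" and t: "t < 2^n" by simp_all
  have e2: "(Mc n b * Mc n a) $$ (r,t) = (\<Sum>P\<in>paulis n. \<Sum>Q\<in>paulis n. a P * b Q * (Om n Q P * pauli_mat n (pmul P Q) $$ (r,t)))"
    apply (subst mult_Mc_entry[OF r t])
    apply (subst sum.swap)
    apply (intro sum.cong refl)
    apply (simp add: pmul_comm mult_ac)
    done
  have "commutator (Mc n a) (Mc n b) $$ (r,t) = (Mc n a * Mc n b) $$ (r,t) - (Mc n b * Mc n a) $$ (r,t)"
    using r t by (simp add: commutator_def)
  also have "\<dots> = (\<Sum>P\<in>paulis n. \<Sum>Q\<in>paulis n. a P * b Q * (Om n P Q * pauli_mat n (pmul P Q) $$ (r,t)))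
     - (\<Sum>P\<in>paulis n. \<Sum>Q\<in>paulis n. a P * b Q * (Om n Q P * pauli_mat n (pmul P Q) $$ (r,t)))"
    by (subst e2, subst mult_Mc_entry[OF r t], rule refl)
  also have "\<dots> = (\<Sum>P\<in>paulis n. \<Sum>Q\<in>paulis n. a P * b Q * (Om n P Q - Om n Q P) * pauli_mat n (pmul P Q) $$ (r,t))"
    by (simp add: sum_subtractf[symmetric] algebra_simps)
  also have "\<dots> = (\<Sum>P\<in>paulis n. \<Sum>X\<in>paulis n. a P * b (pmul P X) * (Om n P (pmul P X) - Om n (pmul P X) P) * pauli_mat n X $$ (r,t))"
    apply (rule sum.cong[OF refl])
    subgoal for P by (subst reindex_pmul[of P]) simp_all
    done
  also have "\<dots> = Mc n (hc n a b) $$ (r,t)"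
    using r t by (simp add: Mc_entry hc_def sum_distrib_right) (rule sum.swap)
  finally show "commutator (Mc n a) (Mc n b) $$ (r,t) = Mc n (hc n a b) $$ (r,t)" .
qed (simp_all add: commutator_def)

definition ac :: "pstring \<Rightarrow> pstring \<Rightarrow> bool" where
  "ac P Q \<longleftrightarrow> (\<exists>i. P i \<noteq> PI \<and> Q i \<noteq> PI \<and> P i \<noteq> Q i)"

lemma ac_supp: "ac P Q \<Longrightarrow> \<exists>i. i \<in> supp P \<and> i \<in> supp Q \<and> i \<in> supp (pmul P Q)"
  by (auto simp: ac_def supp_def pmul_def pm1_PI_iff)

lemma supp_pmul: "i \<in> supp (pmul P Q) \<Longrightarrow> i \<in> supp P \<or> i \<in> supp Q"
  by (auto simp: supp_def pmul_def)

lemma Om_nac: "\<not> ac P Q \<Longrightarrow> Om n P Q = Om n Q P"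
  unfolding Om_def by (rule prod.cong[OF refl]) (rule om_comm, auto simp: ac_def)

lemma CS:
  fixes a c :: "'a \<Rightarrow> real"
  assumes "\<And>x. x \<in> S \<Longrightarrow> a x \<ge> 0"
  shows "(\<Sum>x\<in>S. a x * c x)\<^sup>2 \<le> (\<Sum>x\<in>S. a x) * (\<Sum>x\<in>S. a x * (c x)\<^sup>2)"
proof -
  have e1: "(\<Sum>x\<in>S. a x) * (\<Sum>x\<in>S. a x * (c x)\<^sup>2) = (\<Sum>i\<in>S. \<Sum>j\<in>S. a i * (a j * (c j)\<^sup>2))"
    by (simp add: sum_product)
  have e2: "(\<Sum>x\<in>S. a x * (c x)\<^sup>2) * (\<Sum>x\<in>S. a x) = (\<Sum>i\<in>S. \<Sum>j\<in>S. (a i * (c i)\<^sup>2) * a j)"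
    by (simp add: sum_product)
  have e3: "(\<Sum>x\<in>S. a x * c x)\<^sup>2 = (\<Sum>i\<in>S. \<Sum>j\<in>S. (a i * c i) * (a j * c j))"
    by (simp add: power2_eq_square sum_product)
  have "0 \<le> (\<Sum>i\<in>S. \<Sum>j\<in>S. a i * a j * (c i - c j)\<^sup>2)"
    using assms by (intro sum_nonneg) auto
  also have "\<dots> = (\<Sum>i\<in>S. \<Sum>j\<in>S. a i * (a j * (c j)\<^sup>2) + (a i * (c i)\<^sup>2) * a j - 2 * ((a i * c i) * (a j * c j)))"
    by (intro sum.cong refl) (simp add: power2_eq_square algebra_simps)
  also have "\<dots> = (\<Sum>i\<in>S. \<Sum>j\<in>S. a i * (a j * (c j)\<^sup>2)) + (\<Sum>i\<in>S. \<Sum>j\<in>S. (a i * (c i)\<^sup>2) * a j)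
     - 2 * (\<Sum>i\<in>S. \<Sum>j\<in>S. (a i * c i) * (a j * c j))"
    by (simp add: sum.distrib sum_subtractf sum_distrib_left)
  finally show ?thesis using e1 e2 e3 by (simp add: mult.commute)
qed

lemma UB:
  fixes a :: "pstring \<Rightarrow> real"
  assumes N: "finite N" and I: "finite I" and a: "\<And>P. a P \<ge> 0" and S: "S \<subseteq> N"
    and cov: "\<And>P. P \<in> S \<Longrightarrow> \<exists>i\<in>I. i \<in> supp P"
  shows "(\<Sum>P\<in>S. a P) \<le> (\<Sum>i\<in>I. \<Sum>P\<in>{P\<in>N. i \<in> supp P}. a P)"
proof -
  have fS: "finite S" using N S finite_subset by blast
  have "(\<Sum>P\<in>S. a P) \<le> (\<Sum>P\<in>S. \<Sum>i\<in>I. if i \<in> supp P then a P else 0)"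
  proof (rule sum_mono)
    fix P assume "P \<in> S"
    then obtain i where i: "i \<in> I" "i \<in> supp P" using cov by blast
    have "a P = (if i \<in> supp P then a P else 0)" using i by simp
    also have "\<dots> \<le> (\<Sum>i\<in>I. if i \<in> supp P then a P else 0)"
      by (rule member_le_sum[OF i(1)]) (use a I in auto)
    finally show "a P \<le> (\<Sum>i\<in>I. if i \<in> supp P then a P else 0)" .
  qed
  also have "\<dots> = (\<Sum>i\<in>I. \<Sum>P\<in>S. if i \<in> supp P then a P else 0)"
    by (rule sum.swap)
  also have "\<dots> \<le> (\<Sum>i\<in>I. \<Sum>P\<in>N. if i \<in> supp P then a P else 0)"
    by (intro sum_mono sum_mono2) (use N S a in auto)
  also have "\<dots> = (\<Sum>i\<in>I. \<Sum>P\<in>{P\<in>N. i \<in> supp P}. a P)"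
    by (rule sum.cong[OF refl]) (simp add: sum.inter_filter N)
  finally show ?thesis .
qed

lemma sum_le_card: "(\<And>i. i \<in> I \<Longrightarrow> F i \<le> (L::real)) \<Longrightarrow> (\<Sum>i\<in>I. F i) \<le> real (card I) * L"
  using sum_bounded_above[of I F L] by simp

context
  fixes n k k' :: nat and lam kap :: "pstring \<Rightarrow> real"
  assumes klH: "k_local n k lam" and klG: "k_local n k' kap"
begin

definition "T P Q \<longleftrightarrow> ac P Q \<and> lam P \<noteq> 0 \<and> kap Q \<noteq> 0"
definition "hh = hc n (\<lambda>P. complex_of_real (lam P)) (\<lambda>P. complex_of_real (kap P))"
definition "L1 = loc1 n (hamiltonian n lam)"
definition "L2 = loc2 n (hamiltonian n kap)"
definition "ff P Q = (if T P Q then \<bar>lam P\<bar> * (kap Q)\<^sup>2 else 0)"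

lemma ham_eq: "hamiltonian n f = Mc n (\<lambda>P. complex_of_real (f P))"
  by (simp add: hamiltonian_def Mc_def)

lemma lamD: "lam P \<noteq> 0 \<Longrightarrow> P \<in> paulis n \<and> supp P \<noteq> {} \<and> card (supp P) \<le> k"
  using klH by (auto simp: k_local_def)

lemma kapD: "kap P \<noteq> 0 \<Longrightarrow> P \<in> paulis n \<and> supp P \<noteq> {} \<and> card (supp P) \<le> k'"
  using klG by (auto simp: k_local_def)

lemma finite_supp: "P \<in> paulis n \<Longrightarrow> finite (supp P)"
  using supp_paulis by (meson finite_lessThan finite_subset lessThan_iff subsetI)

lemma L1_bound: "i < n \<Longrightarrow> (\<Sum>P\<in>{P\<in>paulis n. i \<in> supp P}. \<bar>lam P\<bar>) \<le> L1"
proof -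
  assume i: "i < n"
  have "(\<Sum>P\<in>{P\<in>paulis n. i \<in> supp P}. \<bar>lam P\<bar>)
      = (\<Sum>X\<in>{X\<in>paulis n. i \<in> supp X}. cmod (pcoeff n (hamiltonian n lam) X))"
    by (rule sum.cong[OF refl]) (simp add: ham_eq pcoeff_Mc)
  also have "\<dots> \<le> L1" unfolding L1_def loc1_def
    by (rule Max_ge) (use i in auto)
  finally show ?thesis .
qed

lemma L1_nonneg: "0 \<le> L1"
  unfolding L1_def loc1_def by (rule Max_ge) auto

lemma L2_nonneg: "0 \<le> L2"
  unfolding L2_def loc2_def by (rule Max_ge) auto

lemma L2_bound: "j < n \<Longrightarrow> (\<Sum>Q\<in>{Q\<in>paulis n. j \<in> supp Q}. (kap Q)\<^sup>2) \<le> L2\<^sup>2"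
proof -
  assume j: "j < n"
  have "(\<Sum>Q\<in>{Q\<in>paulis n. j \<in> supp Q}. (kap Q)\<^sup>2)
      = (\<Sum>X\<in>{X\<in>paulis n. j \<in> supp X}. (cmod (pcoeff n (hamiltonian n kap) X))\<^sup>2)"
    by (rule sum.cong[OF refl]) (simp add: ham_eq pcoeff_Mc)
  moreover have "sqrt (\<Sum>X\<in>{X\<in>paulis n. j \<in> supp X}. (cmod (pcoeff n (hamiltonian n kap) X))\<^sup>2) \<le> L2"
    unfolding L2_def loc2_def by (rule Max_ge) (use j in auto)
  moreover have "0 \<le> (\<Sum>Q\<in>{Q\<in>paulis n. j \<in> supp Q}. (kap Q)\<^sup>2)" by (intro sum_nonneg) auto
  ultimately show ?thesis
    by (metis real_sqrt_le_iff real_sqrt_unique zero_le_power2 L2_nonneg real_sqrt_pow2 power_mono real_sqrt_ge_zero)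
qed

lemma term_bound:
  "cmod (complex_of_real (lam P) * complex_of_real (kap Q) * (Om n P Q - Om n Q P))
   \<le> (if T P Q then 2 * (\<bar>lam P\<bar> * \<bar>kap Q\<bar>) else 0)"
proof (cases "T P Q")
  case True
  have "cmod (Om n P Q - Om n Q P) \<le> 2"
    using norm_triangle_ineq4[of "Om n P Q" "Om n Q P"] by (simp add: norm_Om)
  then have "\<bar>kap Q\<bar> * \<bar>lam P\<bar> * cmod (Om n P Q - Om n Q P) \<le> \<bar>kap Q\<bar> * \<bar>lam P\<bar> * 2"
    by (intro mult_left_mono) auto
  then show ?thesis using True
    by (simp add: norm_mult mult_ac)
next
  case False
  then have "ac P Q \<Longrightarrow> lam P = 0 \<or> kap Q = 0" by (auto simp: T_def)
  then show ?thesis using False Om_nac[of P Q n] by (cases "ac P Q") auto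
qed

lemma hh_bound: "cmod (hh X) \<le> 2 * (\<Sum>P\<in>paulis n. if T P (pmul P X) then \<bar>lam P\<bar> * \<bar>kap (pmul P X)\<bar> else 0)"
proof -
  have "cmod (hh X) \<le> (\<Sum>P\<in>paulis n. cmod (complex_of_real (lam P) * complex_of_real (kap (pmul P X)) * (Om n P (pmul P X) - Om n (pmul P X) P)))"
    unfolding hh_def hc_def by (rule norm_sum)
  also have "\<dots> \<le> (\<Sum>P\<in>paulis n. if T P (pmul P X) then 2 * (\<bar>lam P\<bar> * \<bar>kap (pmul P X)\<bar>) else 0)"
    by (rule sum_mono) (rule term_bound)
  also have "\<dots> = 2 * (\<Sum>P\<in>paulis n. if T P (pmul P X) then \<bar>lam P\<bar> * \<bar>kap (pmul P X)\<bar> else 0)"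
    by (subst sum_distrib_left) (rule sum.cong[OF refl], simp)
  finally show ?thesis .
qed

lemma ff_nonneg: "0 \<le> ff P Q" by (simp add: ff_def)

lemma kk: "1 \<le> k \<Longrightarrow> 1 \<le> k' \<Longrightarrow> real k + real k' \<le> 2 * real k * real k'"
proof -
  assume "1 \<le> k" "1 \<le> k'"
  then have "k \<le> k * k'" "k' \<le> k * k'" by simp_all
  then have "k + k' \<le> 2 * k * k'" by linarith
  then show ?thesis by (metis of_nat_add of_nat_le_iff of_nat_mult of_nat_numeral)
qed

lemma S_props:
  assumes P: "P \<in> paulis n" and X: "X \<in> paulis n" and TP: "T P (pmul P X)"
  shows "card (supp X) \<le> k + k'" "1 \<le> k" "1 \<le> k'" "\<exists>i\<in>supp X. i \<in> supp P"
proof -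
  have l: "lam P \<noteq> 0" and kq: "kap (pmul P X) \<noteq> 0" and a: "ac P (pmul P X)" using TP by (auto simp: T_def)
  have fP: "finite (supp P)" using P finite_supp by blast
  have fQ: "finite (supp (pmul P X))" using P X finite_supp pmul_paulis by blast
  have "supp X \<subseteq> supp P \<union> supp (pmul P X)"
    using supp_pmul[of _ P "pmul P X"] by auto
  then have "card (supp X) \<le> card (supp P \<union> supp (pmul P X))"
    using fP fQ by (intro card_mono) auto
  also have "\<dots> \<le> card (supp P) + card (supp (pmul P X))" by (rule card_Un_le)
  also have "\<dots> \<le> k + k'" using lamD[OF l] kapD[OF kq] by simp
  finally show "card (supp X) \<le> k + k'" .
  show "1 \<le> k" using lamD[OF l] fP by (metis card_0_eq le_trans less_one not_le)
  show "1 \<le> k'" using kapD[OF kq] fQ by (metis card_0_eq le_trans less_one not_le)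
  show "\<exists>i\<in>supp X. i \<in> supp P" using ac_supp[OF a] by auto
qed

lemma A_bound:
  assumes X: "X \<in> paulis n"
  shows "(\<Sum>P\<in>{P\<in>paulis n. T P (pmul P X)}. \<bar>lam P\<bar>) \<le> 2 * real k * real k' * L1"
proof (cases "{P\<in>paulis n. T P (pmul P X)} = {}")
  case True
  then have "(\<Sum>P\<in>{P\<in>paulis n. T P (pmul P X)}. \<bar>lam P\<bar>) = 0" by (simp only: sum.empty)
  then show ?thesis using L1_nonneg by simp
next
  case False
  then obtain P0 where P0: "P0 \<in> paulis n" "T P0 (pmul P0 X)" by auto
  note SP = S_props[OF P0(1) X P0(2)]
  have "(\<Sum>P\<in>{P\<in>paulis n. T P (pmul P X)}. \<bar>lam P\<bar>) \<le> (\<Sum>i\<in>supp X. \<Sum>P\<in>{P\<in>paulis n. i \<in> supp P}. \<bar>lam P\<bar>)"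
    apply (rule UB[OF finite_paulis finite_supp[OF X]])
    using S_props(4)[OF _ X] by auto
  also have "\<dots> \<le> real (card (supp X)) * L1"
    by (rule sum_le_card) (rule L1_bound, rule supp_paulis[OF X])
  also have "\<dots> \<le> (real k + real k') * L1"
    using SP(1) L1_nonneg by (intro mult_right_mono) auto
  also have "\<dots> \<le> 2 * real k * real k' * L1"
    using kk[OF SP(2) SP(3)] L1_nonneg by (intro mult_right_mono) auto
  finally show ?thesis .
qed

lemma hh_sq:
  assumes X: "X \<in> paulis n"
  shows "(cmod (hh X))\<^sup>2 \<le> 8 * real k * real k' * L1 * (\<Sum>P\<in>paulis n. ff P (pmul P X))"
proof -
  let ?S = "{P\<in>paulis n. T P (pmul P X)}"
  define w where "w = (\<Sum>P\<in>?S. \<bar>lam P\<bar> * \<bar>kap (pmul P X)\<bar>)"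
  have w0: "0 \<le> w" unfolding w_def by (intro sum_nonneg) auto
  have "cmod (hh X) \<le> 2 * w"
    using hh_bound[of X] by (simp add: w_def sum.inter_filter finite_paulis)
  then have "(cmod (hh X))\<^sup>2 \<le> (2 * w)\<^sup>2" by (intro power_mono) auto
  also have "\<dots> = 4 * w\<^sup>2" by (simp add: power2_eq_square)
  also have "w\<^sup>2 \<le> (\<Sum>P\<in>?S. \<bar>lam P\<bar>) * (\<Sum>P\<in>?S. \<bar>lam P\<bar> * \<bar>kap (pmul P X)\<bar>\<^sup>2)"
    unfolding w_def by (rule CS) auto
  also have "(\<Sum>P\<in>?S. \<bar>lam P\<bar> * \<bar>kap (pmul P X)\<bar>\<^sup>2) = (\<Sum>P\<in>paulis n. ff P (pmul P X))"
    by (simp add: ff_def sum.inter_filter finite_paulis)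
  also have "(\<Sum>P\<in>?S. \<bar>lam P\<bar>) * (\<Sum>P\<in>paulis n. ff P (pmul P X)) \<le> 2 * real k * real k' * L1 * (\<Sum>P\<in>paulis n. ff P (pmul P X))"
    by (intro mult_right_mono A_bound X sum_nonneg ff_nonneg)
  finally show ?thesis by simp
qed

lemma G1:
  assumes Q: "Q \<in> paulis n"
  shows "(\<Sum>P\<in>paulis n. ff P Q) \<le> real k' * L1 * (kap Q)\<^sup>2"
proof (cases "kap Q = 0")
  case True then show ?thesis by (simp add: ff_def T_def)
next
  case False
  have e: "(\<Sum>P\<in>paulis n. ff P Q) = (kap Q)\<^sup>2 * (\<Sum>P\<in>{P\<in>paulis n. T P Q}. \<bar>lam P\<bar>)"
    by (simp add: ff_def sum.inter_filter[symmetric] finite_paulis sum_distrib_left if_distrib mult.commute cong: if_cong)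
  have "(\<Sum>P\<in>{P\<in>paulis n. T P Q}. \<bar>lam P\<bar>) \<le> (\<Sum>i\<in>supp Q. \<Sum>P\<in>{P\<in>paulis n. i \<in> supp P}. \<bar>lam P\<bar>)"
    apply (rule UB[OF finite_paulis finite_supp[OF Q]])
    using ac_supp by (auto simp: T_def)
  also have "\<dots> \<le> real (card (supp Q)) * L1"
    by (rule sum_le_card) (rule L1_bound, rule supp_paulis[OF Q])
  also have "\<dots> \<le> real k' * L1"
    using kapD[OF False] L1_nonneg by (intro mult_right_mono) auto
  finally have "(\<Sum>P\<in>{P\<in>paulis n. T P Q}. \<bar>lam P\<bar>) \<le> real k' * L1" .
  then have "(kap Q)\<^sup>2 * (\<Sum>P\<in>{P\<in>paulis n. T P Q}. \<bar>lam P\<bar>) \<le> (kap Q)\<^sup>2 * (real k' * L1)"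
    by (intro mult_left_mono) auto
  then show ?thesis using e by (simp add: mult.commute)
qed

lemma G2:
  assumes P: "P \<in> paulis n"
  shows "(\<Sum>Q\<in>paulis n. ff P Q) \<le> real k * L2\<^sup>2 * \<bar>lam P\<bar>"
proof (cases "lam P = 0")
  case True then show ?thesis by (simp add: ff_def T_def)
next
  case False
  have e: "(\<Sum>Q\<in>paulis n. ff P Q) = \<bar>lam P\<bar> * (\<Sum>Q\<in>{Q\<in>paulis n. T P Q}. (kap Q)\<^sup>2)"
    by (simp add: ff_def sum.inter_filter[symmetric] finite_paulis sum_distrib_left if_distrib cong: if_cong)
  have "(\<Sum>Q\<in>{Q\<in>paulis n. T P Q}. (kap Q)\<^sup>2) \<le> (\<Sum>i\<in>supp P. \<Sum>Q\<in>{Q\<in>paulis n. i \<in> supp Q}. (kap Q)\<^sup>2)"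
    apply (rule UB[OF finite_paulis finite_supp[OF P]])
    using ac_supp by (auto simp: T_def)
  also have "\<dots> \<le> real (card (supp P)) * L2\<^sup>2"
    by (rule sum_le_card) (rule L2_bound, rule supp_paulis[OF P])
  also have "\<dots> \<le> real k * L2\<^sup>2"
    using lamD[OF False] by (intro mult_right_mono) auto
  finally have "(\<Sum>Q\<in>{Q\<in>paulis n. T P Q}. (kap Q)\<^sup>2) \<le> real k * L2\<^sup>2" .
  then have "\<bar>lam P\<bar> * (\<Sum>Q\<in>{Q\<in>paulis n. T P Q}. (kap Q)\<^sup>2) \<le> \<bar>lam P\<bar> * (real k * L2\<^sup>2)"
    by (intro mult_left_mono) auto
  then show ?thesis using e by (simp add: mult.commute)
qed

lemma swap_reindex: "(\<Sum>X\<in>paulis n. \<Sum>P\<in>paulis n. F P X (pmul P X)) = (\<Sum>P\<in>paulis n. \<Sum>Q\<in>paulis n. F P (pmul P Q) Q)"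
proof -
  have "(\<Sum>X\<in>paulis n. \<Sum>P\<in>paulis n. F P X (pmul P X)) = (\<Sum>P\<in>paulis n. \<Sum>X\<in>paulis n. F P X (pmul P X))"
    by (rule sum.swap)
  also have "\<dots> = (\<Sum>P\<in>paulis n. \<Sum>Q\<in>paulis n. F P (pmul P Q) Q)"
    apply (rule sum.cong[OF refl])
    subgoal for P by (subst reindex_pmul[of P]) simp_all
    done
  finally show ?thesis .
qed

lemma tot: "(\<Sum>X\<in>paulis n. \<Sum>P\<in>paulis n. ff P (pmul P X)) \<le> real k' * L1 * (\<Sum>Q\<in>paulis n. (kap Q)\<^sup>2)"
proof -
  have "(\<Sum>X\<in>paulis n. \<Sum>P\<in>paulis n. ff P (pmul P X)) = (\<Sum>P\<in>paulis n. \<Sum>Q\<in>paulis n. ff P Q)"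
    using swap_reindex[of "\<lambda>P X Q. ff P Q"] by simp
  also have "\<dots> = (\<Sum>Q\<in>paulis n. \<Sum>P\<in>paulis n. ff P Q)" by (rule sum.swap)
  also have "\<dots> \<le> (\<Sum>Q\<in>paulis n. real k' * L1 * (kap Q)\<^sup>2)" by (intro sum_mono G1)
  also have "\<dots> = real k' * L1 * (\<Sum>Q\<in>paulis n. (kap Q)\<^sup>2)" by (simp add: sum_distrib_left)
  finally show ?thesis .
qed

lemma site:
  assumes i: "i < n"
  shows "(\<Sum>X\<in>{X\<in>paulis n. i \<in> supp X}. \<Sum>P\<in>paulis n. ff P (pmul P X)) \<le> (real k + real k') * L1 * L2\<^sup>2"
proof -
  have "(\<Sum>X\<in>{X\<in>paulis n. i \<in> supp X}. \<Sum>P\<in>paulis n. ff P (pmul P X))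
     = (\<Sum>X\<in>paulis n. if i \<in> supp X then (\<Sum>P\<in>paulis n. ff P (pmul P X)) else 0)"
    by (rule sum.inter_filter[OF finite_paulis])
  also have "\<dots> = (\<Sum>X\<in>paulis n. \<Sum>P\<in>paulis n. if i \<in> supp X then ff P (pmul P X) else 0)"
    by (rule sum.cong[OF refl]) simp
  also have "\<dots> = (\<Sum>P\<in>paulis n. \<Sum>Q\<in>paulis n. if i \<in> supp (pmul P Q) then ff P Q else 0)"
    using swap_reindex[of "\<lambda>P X Q. if i \<in> supp X then ff P Q else 0"] by simp
  also have "\<dots> \<le> (\<Sum>P\<in>paulis n. \<Sum>Q\<in>paulis n. (if i \<in> supp Q then ff P Q else 0) + (if i \<in> supp P then ff P Q else 0))"
    by (intro sum_mono) (use supp_pmul ff_nonneg in auto)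
  also have "\<dots> = (\<Sum>Q\<in>paulis n. if i \<in> supp Q then (\<Sum>P\<in>paulis n. ff P Q) else 0)
      + (\<Sum>P\<in>paulis n. if i \<in> supp P then (\<Sum>Q\<in>paulis n. ff P Q) else 0)"
  proof -
    have "(\<Sum>P\<in>paulis n. \<Sum>Q\<in>paulis n. (if i \<in> supp Q then ff P Q else 0) + (if i \<in> supp P then ff P Q else 0))
      = (\<Sum>P\<in>paulis n. \<Sum>Q\<in>paulis n. (if i \<in> supp Q then ff P Q else 0)) + (\<Sum>P\<in>paulis n. \<Sum>Q\<in>paulis n. (if i \<in> supp P then ff P Q else 0))"
      by (simp only: sum.distrib)
    also have "(\<Sum>P\<in>paulis n. \<Sum>Q\<in>paulis n. (if i \<in> supp Q then ff P Q else 0)) = (\<Sum>Q\<in>paulis n. \<Sum>P\<in>paulis n. (if i \<in> supp Q then ff P Q else 0))"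
      by (rule sum.swap)
    also have "\<dots> = (\<Sum>Q\<in>paulis n. if i \<in> supp Q then (\<Sum>P\<in>paulis n. ff P Q) else 0)"
      by (rule sum.cong[OF refl]) simp
    also have "(\<Sum>P\<in>paulis n. \<Sum>Q\<in>paulis n. (if i \<in> supp P then ff P Q else 0)) = (\<Sum>P\<in>paulis n. if i \<in> supp P then (\<Sum>Q\<in>paulis n. ff P Q) else 0)"
      by (rule sum.cong[OF refl]) simp
    finally show ?thesis .
  qed
  also have "\<dots> \<le> (\<Sum>Q\<in>paulis n. if i \<in> supp Q then real k' * L1 * (kap Q)\<^sup>2 else 0)
      + (\<Sum>P\<in>paulis n. if i \<in> supp P then real k * L2\<^sup>2 * \<bar>lam P\<bar> else 0)"
    by (intro add_mono sum_mono) (auto intro: G1 G2)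
  also have "\<dots> = real k' * L1 * (\<Sum>Q\<in>{Q\<in>paulis n. i \<in> supp Q}. (kap Q)\<^sup>2)
      + real k * L2\<^sup>2 * (\<Sum>P\<in>{P\<in>paulis n. i \<in> supp P}. \<bar>lam P\<bar>)"
    by (simp add: sum.inter_filter[symmetric] finite_paulis sum_distrib_left if_distrib cong: if_cong)
  also have "\<dots> \<le> real k' * L1 * L2\<^sup>2 + real k * L2\<^sup>2 * L1"
    using L1_bound[OF i] L2_bound[OF i] L1_nonneg by (intro add_mono mult_left_mono) auto
  finally show ?thesis by (simp add: algebra_simps)
qed

lemma num1: "8 * real k * real k' * (real k + real k') \<le> 16 * (real k)\<^sup>2 * (real k')\<^sup>2"
proof (cases "k = 0 \<or> k' = 0")
  case True then show ?thesis by auto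
next
  case False
  then have "1 \<le> k" "1 \<le> k'" by auto
  from kk[OF this] have "8 * real k * real k' * (real k + real k') \<le> 8 * real k * real k' * (2 * real k * real k')"
    by (intro mult_left_mono) auto
  then show ?thesis by (simp add: power2_eq_square mult_ac)
qed

lemma num2: "8 * real k * real k' * real k' \<le> 16 * (real k)\<^sup>2 * (real k')\<^sup>2"
proof -
  have "real k \<le> (real k)\<^sup>2" by (cases k) (auto simp: power2_eq_square)
  then have "8 * real k' * real k' * real k \<le> 8 * real k' * real k' * (real k)\<^sup>2"
    by (intro mult_left_mono) auto
  moreover have "0 \<le> 8 * real k' * real k' * (real k)\<^sup>2" by simp
  moreover have "16 * (real k)\<^sup>2 * (real k')\<^sup>2 = 2 * (8 * real k' * real k' * (real k)\<^sup>2)"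
    by (simp add: power2_eq_square)
  moreover have "8 * real k * real k' * real k' = 8 * real k' * real k' * real k" by simp
  ultimately show ?thesis by linarith
qed

lemma comm_eq: "commutator (hamiltonian n lam) (hamiltonian n kap) = Mc n hh"
  by (simp add: ham_eq comm_Mc hh_def)

lemma sqrt_le: "0 \<le> y \<Longrightarrow> x \<le> y\<^sup>2 \<Longrightarrow> sqrt x \<le> y"
  using real_sqrt_le_mono[of x "y\<^sup>2"] by simp

lemma main_loc2: "loc2 n (commutator (hamiltonian n lam) (hamiltonian n kap)) \<le> 4 * real k' * real k * L1 * L2"
proof -
  have B0: "0 \<le> 4 * real k' * real k * L1 * L2" using L1_nonneg L2_nonneg by simp
  have "sqrt (\<Sum>X\<in>{X\<in>paulis n. i \<in> supp X}. (cmod (pcoeff n (Mc n hh) X))\<^sup>2) \<le> 4 * real k' * real k * L1 * L2"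
    if i: "i < n" for i
  proof (rule sqrt_le[OF B0])
    have "(\<Sum>X\<in>{X\<in>paulis n. i \<in> supp X}. (cmod (pcoeff n (Mc n hh) X))\<^sup>2)
        = (\<Sum>X\<in>{X\<in>paulis n. i \<in> supp X}. (cmod (hh X))\<^sup>2)"
      by (rule sum.cong[OF refl]) (simp add: pcoeff_Mc)
    also have "\<dots> \<le> (\<Sum>X\<in>{X\<in>paulis n. i \<in> supp X}. 8 * real k * real k' * L1 * (\<Sum>P\<in>paulis n. ff P (pmul P X)))"
      by (intro sum_mono hh_sq) auto
    also have "\<dots> = 8 * real k * real k' * L1 * (\<Sum>X\<in>{X\<in>paulis n. i \<in> supp X}. \<Sum>P\<in>paulis n. ff P (pmul P X))"
      by (simp add: sum_distrib_left)
    also have "\<dots> \<le> 8 * real k * real k' * L1 * ((real k + real k') * L1 * L2\<^sup>2)"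
      using L1_nonneg by (intro mult_left_mono site i) auto
    also have "\<dots> = (8 * real k * real k' * (real k + real k')) * (L1\<^sup>2 * L2\<^sup>2)"
      by (simp add: power2_eq_square mult_ac)
    also have "\<dots> \<le> (16 * (real k)\<^sup>2 * (real k')\<^sup>2) * (L1\<^sup>2 * L2\<^sup>2)"
      by (intro mult_right_mono num1) auto
    also have "\<dots> = (4 * real k' * real k * L1 * L2)\<^sup>2"
      by (simp add: power2_eq_square mult_ac)
    finally show "(\<Sum>X\<in>{X\<in>paulis n. i \<in> supp X}. (cmod (pcoeff n (Mc n hh) X))\<^sup>2) \<le> (4 * real k' * real k * L1 * L2)\<^sup>2" .
  qed
  then show ?thesis
    unfolding comm_eq loc2_def using B0 by (subst Max_le_iff) auto
qed

lemma main_frob: "frob (commutator (hamiltonian n lam) (hamiltonian n kap)) \<le> 4 * real k' * real k * L1 * frob (hamiltonian n kap)"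
proof -
  define S where "S = (\<Sum>Q\<in>paulis n. (kap Q)\<^sup>2)"
  have S0: "0 \<le> S" unfolding S_def by (intro sum_nonneg) auto
  have fG: "frob (hamiltonian n kap) = sqrt (2^n * S)"
    by (simp add: ham_eq frob_Mc S_def)
  have "(\<Sum>X\<in>paulis n. (cmod (hh X))\<^sup>2) \<le> (\<Sum>X\<in>paulis n. 8 * real k * real k' * L1 * (\<Sum>P\<in>paulis n. ff P (pmul P X)))"
    by (intro sum_mono hh_sq) auto
  also have "\<dots> = 8 * real k * real k' * L1 * (\<Sum>X\<in>paulis n. \<Sum>P\<in>paulis n. ff P (pmul P X))"
    by (simp add: sum_distrib_left)
  also have "\<dots> \<le> 8 * real k * real k' * L1 * (real k' * L1 * S)"
    using L1_nonneg unfolding S_def by (intro mult_left_mono tot) auto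
  also have "\<dots> = (8 * real k * real k' * real k') * (L1\<^sup>2 * S)"
    by (simp add: power2_eq_square mult_ac)
  also have "\<dots> \<le> (16 * (real k)\<^sup>2 * (real k')\<^sup>2) * (L1\<^sup>2 * S)"
    using S0 by (intro mult_right_mono num2) auto
  finally have hs: "(\<Sum>X\<in>paulis n. (cmod (hh X))\<^sup>2) \<le> 16 * (real k)\<^sup>2 * (real k')\<^sup>2 * L1\<^sup>2 * S"
    by (simp add: mult_ac)
  have "frob (commutator (hamiltonian n lam) (hamiltonian n kap)) = sqrt (2^n * (\<Sum>X\<in>paulis n. (cmod (hh X))\<^sup>2))"
    by (simp add: comm_eq frob_Mc)
  also have "\<dots> \<le> sqrt (2^n * (16 * (real k)\<^sup>2 * (real k')\<^sup>2 * L1\<^sup>2 * S))"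
    using hs by (intro real_sqrt_le_mono mult_left_mono) auto
  also have "\<dots> = sqrt ((4 * real k' * real k * L1)\<^sup>2 * (2^n * S))"
    by (simp add: power2_eq_square mult_ac)
  also have "\<dots> = 4 * real k' * real k * L1 * sqrt (2^n * S)"
    using L1_nonneg by (simp add: real_sqrt_mult)
  finally show ?thesis using fG by simp
qed

lemma main_all: "loc2 n (commutator (hamiltonian n lam) (hamiltonian n kap))
     \<le> 4 * real k' * real k * loc1 n (hamiltonian n lam) * loc2 n (hamiltonian n kap)
  \<and> frob (commutator (hamiltonian n lam) (hamiltonian n kap))
     \<le> 4 * real k' * real k * loc1 n (hamiltonian n lam) * frob (hamiltonian n kap)"
  using main_loc2 main_frob unfolding L1_def L2_def by blast

end

theorem lemma3p9:
  "\<exists>C>0. \<forall>(n::nat) (k::nat) (k'::nat) (lam::pstring \<Rightarrow> real) (kap::pstring \<Rightarrow> real).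
     k_local n k lam \<longrightarrow> k_local n k' kap \<longrightarrow>
       (let H = hamiltonian n lam; G = hamiltonian n kap; HG = commutator H G in
          loc2 n HG \<le> C * real k' * real k * loc1 n H * loc2 n G
        \<and> frob HG \<le> C * real k' * real k * loc1 n H * frob G)"
proof (intro exI[of _ 4] conjI allI impI)
  fix n k k' :: nat and lam kap :: "pstring \<Rightarrow> real"
  assume a: "k_local n k lam" "k_local n k' kap"
  show "let H = hamiltonian n lam; G = hamiltonian n kap; HG = commutator H G in
          loc2 n HG \<le> 4 * real k' * real k * loc1 n H * loc2 n G
        \<and> frob HG \<le> 4 * real k' * real k * loc1 n H * frob G"
    unfolding Let_def using main_all[OF a] .
qed simp

end
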